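(* Let $\Omega\subseteq\mathbb{R}^2$ be open, let $P\subset\Omega$ be a compact polygon, and let $s:\Omega\to\mathbb{R}^n$ be a smooth surface. Consider finite partitions $\Pi$ of $P$ into non-overlapping nondegenerate oriented triangles $[a_i,b_i,c_i]$, each balanced in $\Omega$, where the vertices are labelled so that $a_i'$, the mirror vertex of $a_i$ (the reflection of $a_i$ across the line through $b_i$ and $c_i$), is a balanced mirror vertex with the triangle $a_i',b_i,c_i$ contained in $\Omega$. Let $\|\Pi\|$ be the maximal side length of the triangles in $\Pi$. Then $$\lim_{\|\Pi\|\to 0}\ \frac14\sum_{[a_i,b_i,c_i]\in\Pi}\Big|\big[s(a_i')-s(a_i)\big]\wedge\big[s(c_i)-s(b_i)\big]\Big| \;=\; \int_P\big|\partial_1 s(x)\wedge\partial_2 s(x)\big|\,dx,$$ i.e. for every $\varepsilon>0$ there is $\delta>0$ such that for every such partition $\Pi$ with $\|\Pi\|<\delta$ the sum differs from the integral by less than $\varepsilon$.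
   Context: Two sets are non-overlapping if their interiors are disjoint; the partition need not be a triangulation. $\wedge$ is the exterior product and $|\cdot|$ is the Euclidean norm on $\Lambda^2\mathbb{R}^n$ for which $\{h_j\wedge h_k\}_{j<k}$ is orthonormal when $\{h_j\}$ is an orthonormal basis of $\mathbb{R}^n$. $\partial_i s(x)=\sum_j\partial_{\ell_i}\sigma_j(x)h_j$ for an orthonormal basis $\{\ell_1,\ell_2\}$ of $\mathbb{R}^2$ and $\sigma_j=s\cdot h_j$. A real function on $\Omega$ is smooth if it is $C^2$ and the eigenvalues of its Hessian are bounded in absolute value uniformly on $\Omega$; $s$ is a smooth surface if all components $\sigma_j$ are smooth. For a nondegenerate triangle with vertices $x,x_+,x_-$, the mirror vertex of $x$ is its reflection $x'$ across the line through $x_+,x_-$; it is balanced if $\frac12(x+x')$ lies in the segment $[x_+,x_-]$. A triangle $\Delta$ is balanced in $\Omega$ if $\Delta\subset\Omega$ and for some vertex $x$ of $\Delta$ the mirror vertex $x'$ is balanced and the triangle with vertices $x',x_+,x_-$ is contained in $\Omega$. *)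

theory Defs
  imports "HOL-Analysis.Analysis"
begin

fun polypath :: "(real^2) list \<Rightarrow> real \<Rightarrow> real^2" where
  "polypath [] = linepath 0 0"
| "polypath [a] = linepath a a"
| "polypath [a, b] = linepath a b"
| "polypath (a # b # c # rest) = linepath a b +++ polypath (b # c # rest)"

definition compact_polygon :: "(real^2) set \<Rightarrow> bool" where
  "compact_polygon P \<longleftrightarrow>
     (\<exists>vs. length vs \<ge> 4 \<and> hd vs = last vs \<and>
        simple_path (polypath vs) \<and> pathfinish (polypath vs) = pathstart (polypath vs) \<and>
        P = path_image (polypath vs) \<union> inside (path_image (polypath vs)))"

definition triangle :: "real^2 \<Rightarrow> real^2 \<Rightarrow> real^2 \<Rightarrow> (real^2) set" where
  "triangle x y z = convex hull {x, y, z}"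

definition nondegenerate :: "real^2 \<Rightarrow> real^2 \<Rightarrow> real^2 \<Rightarrow> bool" where
  "nondegenerate x y z \<longleftrightarrow> \<not> collinear {x, y, z}"

definition foot :: "real^2 \<Rightarrow> real^2 \<Rightarrow> real^2 \<Rightarrow> real^2" where
  "foot x y z = y + (((x - y) \<bullet> (z - y)) / (norm (z - y))\<^sup>2) *\<^sub>R (z - y)"

definition mirror :: "real^2 \<Rightarrow> real^2 \<Rightarrow> real^2 \<Rightarrow> real^2" where
  "mirror x y z = 2 *\<^sub>R foot x y z - x"

definition balanced_mirror :: "real^2 \<Rightarrow> real^2 \<Rightarrow> real^2 \<Rightarrow> bool" where
  "balanced_mirror x y z \<longleftrightarrow> (1/2) *\<^sub>R (x + mirror x y z) \<in> closed_segment y z"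

definition balanced_at_a :: "(real^2) set \<Rightarrow> real^2 \<Rightarrow> real^2 \<Rightarrow> real^2 \<Rightarrow> bool" where
  "balanced_at_a \<Omega> a b c \<longleftrightarrow>
     triangle a b c \<subseteq> \<Omega> \<and> balanced_mirror a b c \<and> triangle (mirror a b c) b c \<subseteq> \<Omega>"

definition tri :: "(real^2) \<times> (real^2) \<times> (real^2) \<Rightarrow> (real^2) set" where
  "tri t = (case t of (a, b, c) \<Rightarrow> triangle a b c)"

definition admissible_partition ::
  "(real^2) set \<Rightarrow> (real^2) set \<Rightarrow> ((real^2) \<times> (real^2) \<times> (real^2)) set \<Rightarrow> bool" where
  "admissible_partition \<Omega> P Pt \<longleftrightarrow>
     finite Pt \<and>
     \<Union>(tri ` Pt) = P \<and>
     (\<forall>(a, b, c)\<in>Pt. nondegenerate a b c \<and> balanced_at_a \<Omega> a b c) \<and>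
     (\<forall>t1\<in>Pt. \<forall>t2\<in>Pt. t1 \<noteq> t2 \<longrightarrow> interior (tri t1) \<inter> interior (tri t2) = {})"

definition mesh :: "((real^2) \<times> (real^2) \<times> (real^2)) set \<Rightarrow> real" where
  "mesh Pt = Max (insert 0 ((\<lambda>(a,b,c). max (dist a b) (max (dist b c) (dist c a))) ` Pt))"

text \<open>|u \<and> v| in \<Lambda>^2 R^n, with {h_j \<and> h_k}_{j<k} orthonormal for the standard basis:
  the sum over unordered pairs j<k equals half the sum over all ordered pairs.\<close>
definition wedge_norm :: "real^'n \<Rightarrow> real^'n \<Rightarrow> real" where
  "wedge_norm u v = sqrt ((1/2) * (\<Sum>j\<in>UNIV. \<Sum>k\<in>UNIV. (u$j * v$k - u$k * v$j)\<^sup>2))"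

definition is_eigenvalue :: "real^2^2 \<Rightarrow> real \<Rightarrow> bool" where
  "is_eigenvalue A lam \<longleftrightarrow> (\<exists>v. v \<noteq> 0 \<and> A *v v = lam *\<^sub>R v)"

definition smooth_fun :: "(real^2) set \<Rightarrow> (real^2 \<Rightarrow> real) \<Rightarrow> bool" where
  "smooth_fun \<Omega> f \<longleftrightarrow>
     (\<exists>g H. (\<forall>x\<in>\<Omega>. (f has_derivative (\<lambda>h. g x \<bullet> h)) (at x) \<and>
                    (g has_derivative (\<lambda>h. H x *v h)) (at x)) \<and>
            continuous_on \<Omega> H \<and>
            (\<exists>M. \<forall>x\<in>\<Omega>. \<forall>lam. is_eigenvalue (H x) lam \<longrightarrow> \<bar>lam\<bar> \<le> M))"

definition smooth_surface :: "(real^2) set \<Rightarrow> (real^2 \<Rightarrow> real^'n) \<Rightarrow> bool" where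
  "smooth_surface \<Omega> s \<longleftrightarrow> (\<forall>j. smooth_fun \<Omega> (\<lambda>x. s x $ j))"

definition partial_dir :: "(real^2 \<Rightarrow> real^'n) \<Rightarrow> real^2 \<Rightarrow> real^2 \<Rightarrow> real^'n" where
  "partial_dir s l x = (\<chi> j. frechet_derivative (\<lambda>y. s y $ j) (at x) l)"

end

theory Submission
  imports Defs
begin


definition det2 :: "real^2 \<Rightarrow> real^2 \<Rightarrow> real" where
  "det2 u v = u$1 * v$2 - u$2 * v$1"

lemma inner2: "(u::real^2) \<bullet> v = u$1 * v$1 + u$2 * v$2"
  by (simp add: inner_vec_def sum_2)

lemma norm2sq: "(norm (u::real^2))\<^sup>2 = (u$1)\<^sup>2 + (u$2)\<^sup>2"
  unfolding power2_norm_eq_inner inner2 by (simp add: power2_eq_square)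

lemma det2_lagrange: "(det2 u v)\<^sup>2 = (norm u)\<^sup>2 * (norm v)\<^sup>2 - (u \<bullet> v)\<^sup>2"
  unfolding norm2sq inner2 det2_def by (simp add: algebra_simps power2_eq_square)

lemma det2_orth: "u \<bullet> v = 0 \<Longrightarrow> \<bar>det2 u v\<bar> = norm u * norm v"
proof -
  assume "u \<bullet> v = 0"
  then have "(det2 u v)\<^sup>2 = (norm u * norm v)\<^sup>2" by (simp add: det2_lagrange power_mult_distrib)
  then show ?thesis by (metis abs_of_nonneg norm_ge_zero real_sqrt_abs zero_le_mult_iff)
qed

lemma wedge_lin:
  fixes p :: "'n::finite \<Rightarrow> real^2"
  shows "wedge_norm (\<chi> j. p j \<bullet> u) (\<chi> j. p j \<bullet> v) = \<bar>det2 u v\<bar> * wedge_norm (\<chi> j. p j $ 1) (\<chi> j. p j $ 2)"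
proof -
  have e: "((p j \<bullet> u) * (p k \<bullet> v) - (p k \<bullet> u) * (p j \<bullet> v))\<^sup>2 = (det2 u v)\<^sup>2 * (p j $ 1 * p k $ 2 - p k $ 1 * p j $ 2)\<^sup>2" for j k
    unfolding inner2 det2_def by (simp add: algebra_simps power2_eq_square)
  have s: "(\<Sum>j\<in>UNIV. \<Sum>k\<in>UNIV. ((p j \<bullet> u) * (p k \<bullet> v) - (p k \<bullet> u) * (p j \<bullet> v))\<^sup>2)
     = (det2 u v)\<^sup>2 * (\<Sum>j\<in>UNIV. \<Sum>k\<in>UNIV. (p j $ 1 * p k $ 2 - p k $ 1 * p j $ 2)\<^sup>2)"
    by (simp only: e sum_distrib_left)
  show ?thesis unfolding wedge_norm_def
    apply (simp only: vec_lambda_beta s)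
    by (simp only: times_divide_eq_right[symmetric] real_sqrt_mult real_sqrt_abs) (simp add: ac_simps)
qed

definition Wv :: "real^'n \<Rightarrow> real^'n \<Rightarrow> real^('n\<times>'n)" where
  "Wv u v = (\<chi> p. u$(fst p) * v$(snd p) - u$(snd p) * v$(fst p))"

lemma sum_sq_pairs: "(\<Sum>p\<in>UNIV. (f p)::real) = (\<Sum>j\<in>UNIV. \<Sum>k\<in>UNIV. f (j,k))"
proof -
  have "(\<Sum>p\<in>UNIV\<times>UNIV. (f p)::real) = (\<Sum>j\<in>UNIV. \<Sum>k\<in>UNIV. f (j,k))"
    by (simp add: sum.cartesian_product)
  then show ?thesis by (simp only: UNIV_Times_UNIV)
qed

lemma wedge_Wv: "wedge_norm u v = norm (Wv u v) / sqrt 2"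
proof -
  have "(norm (Wv u v))\<^sup>2 = (\<Sum>j\<in>UNIV. \<Sum>k\<in>UNIV. (u$j * v$k - u$k * v$j)\<^sup>2)"
    unfolding power2_norm_eq_inner inner_vec_def Wv_def
    by (subst sum_sq_pairs) (simp add: power2_eq_square)
  then have "norm (Wv u v) = sqrt (\<Sum>j\<in>UNIV. \<Sum>k\<in>UNIV. (u$j * v$k - u$k * v$j)\<^sup>2)"
    by (metis norm_ge_zero real_sqrt_unique)
  then show ?thesis unfolding wedge_norm_def by (simp add: real_sqrt_mult real_sqrt_divide)
qed

lemma sq4: "((a::real)*b)*(a*b) = (a*a)*(b*b)" by (simp add: algebra_simps)

lemma norm_outer: "norm (\<chi> p. (u::real^'n)$(fst p) * (v::real^'n)$(snd p)) = norm u * norm v"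
proof -
  have "(norm (\<chi> p. u$(fst p) * v$(snd p)))\<^sup>2 = (\<Sum>j\<in>UNIV. \<Sum>k\<in>UNIV. (u$j * u$j) * (v$k * v$k))"
    unfolding power2_norm_eq_inner inner_vec_def
    by (subst sum_sq_pairs) (simp only: vec_lambda_beta fst_conv snd_conv inner_real_def sq4)
  also have "\<dots> = (\<Sum>j\<in>UNIV. u$j * u$j) * (\<Sum>k\<in>UNIV. v$k * v$k)"
    by (rule sum_product[symmetric])
  also have "\<dots> = (norm u * norm v)\<^sup>2"
    by (simp only: power_mult_distrib power2_norm_eq_inner inner_vec_def inner_real_def)
  finally have "(norm (\<chi> p. u$(fst p) * v$(snd p)))\<^sup>2 = (norm u * norm v)\<^sup>2" .
  then show ?thesis by (rule power2_eq_imp_eq) auto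
qed

lemma norm_Wv: "norm (Wv u v) \<le> 2 * norm u * norm v"
proof -
  have "Wv u v = (\<chi> p. u$(fst p) * v$(snd p)) - (\<chi> p. v$(fst p) * u$(snd p))"
    unfolding Wv_def by (simp add: vec_eq_iff mult.commute)
  then have "norm (Wv u v) \<le> norm (\<chi> p. u$(fst p) * v$(snd p)) + norm (\<chi> p. v$(fst p) * u$(snd p))"
    by (metis norm_triangle_ineq4)
  then show ?thesis by (simp add: norm_outer)
qed

lemma Wv_diff: "Wv a b - Wv c d = Wv (a - c) b + Wv c (b - d)"
  unfolding Wv_def by (simp add: vec_eq_iff algebra_simps)

lemma wedge_diff: "\<bar>wedge_norm a b - wedge_norm c d\<bar> \<le> 2 * norm (a - c) * norm b + 2 * norm c * norm (b - d)"
proof -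
  have "\<bar>wedge_norm a b - wedge_norm c d\<bar> = \<bar>norm (Wv a b) - norm (Wv c d)\<bar> / sqrt 2"
  proof -
    have eq: "wedge_norm a b - wedge_norm c d = (norm (Wv a b) - norm (Wv c d)) / sqrt 2"
      by (simp add: wedge_Wv diff_divide_distrib)
    show ?thesis unfolding eq abs_divide by simp
  qed
  also have "\<dots> \<le> \<bar>norm (Wv a b) - norm (Wv c d)\<bar>"
    using divide_left_mono[of 1 "sqrt 2" "\<bar>norm (Wv a b) - norm (Wv c d)\<bar>"] by simp
  also have "\<dots> \<le> norm (Wv a b - Wv c d)" by (rule norm_triangle_ineq3)
  also have "\<dots> \<le> norm (Wv (a - c) b) + norm (Wv c (b - d))" by (simp add: Wv_diff norm_triangle_ineq)
  also have "\<dots> \<le> 2 * norm (a - c) * norm b + 2 * norm c * norm (b - d)"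
    by (intro add_mono norm_Wv)
  finally show ?thesis .
qed



lemma mirror_sub: "mirror a b c - a = 2 *\<^sub>R (foot a b c - a)"
  unfolding mirror_def by (simp add: algebra_simps scaleR_2)

lemma foot_eq: "foot a b c - a = (b - a) + (((a - b) \<bullet> (c - b)) / (norm (c - b))\<^sup>2) *\<^sub>R (c - b)"
  unfolding foot_def by (simp add: algebra_simps)

lemma foot_orth: assumes "b \<noteq> c" shows "(foot a b c - a) \<bullet> (c - b) = 0"
proof -
  define t where "t = ((a - b) \<bullet> (c - b)) / (norm (c - b))\<^sup>2"
  have n: "(norm (c - b))\<^sup>2 \<noteq> 0" using assms by simp
  have "(foot a b c - a) \<bullet> (c - b) = (b - a) \<bullet> (c - b) + t * ((c - b) \<bullet> (c - b))"
    unfolding foot_eq t_def[symmetric] by (simp add: inner_add_left)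
  also have "t * ((c - b) \<bullet> (c - b)) = (a - b) \<bullet> (c - b)"
    using n by (simp add: t_def power2_norm_eq_inner)
  finally show ?thesis by (simp add: inner_diff_left)
qed

lemma det2_gen: "det2 ((b - a) + t *\<^sub>R (c - b)) (c - b) = det2 (b - a) (c - a)"
  by (simp add: det2_def algebra_simps)

lemma det2_foot: "det2 (foot a b c - a) (c - b) = det2 (b - a) (c - a)"
  unfolding foot_eq by (rule det2_gen)

lemma det2_scale: "det2 (r *\<^sub>R x) y = r * det2 x y"
  by (simp add: det2_def algebra_simps)

lemma content_tri: "measure lebesgue (triangle a b c) = \<bar>det2 (b - a) (c - a)\<bar> / 2"
proof -
  have "compact (triangle a b c)" unfolding triangle_def by (intro finite_imp_compact_convex_hull) auto
  then have "measure lebesgue (triangle a b c) = Henstock_Kurzweil_Integration.content (triangle a b c)"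
    by (intro measure_completion) (auto dest: compact_imp_closed)
  also have "\<dots> = \<bar>det2 (b - a) (c - a)\<bar> / 2"
    unfolding triangle_def Simplex_Content.content_triangle det2_def
    by (simp add: abs_minus_commute algebra_simps)
  finally show ?thesis .
qed

lemma mirror_prod:
  assumes "b \<noteq> c"
  shows "norm (mirror a b c - a) * norm (c - b) = 4 * measure lebesgue (triangle a b c)"
proof -
  have "norm (mirror a b c - a) * norm (c - b) = 2 * (norm (foot a b c - a) * norm (c - b))"
    by (simp add: mirror_sub)
  also have "norm (foot a b c - a) * norm (c - b) = \<bar>det2 (foot a b c - a) (c - b)\<bar>"
    using det2_orth[OF foot_orth[OF assms]] by simp
  finally show ?thesis by (simp add: det2_foot content_tri)
qed

lemma det2_mirror: "\<bar>det2 (mirror a b c - a) (c - b)\<bar> = 4 * measure lebesgue (triangle a b c)"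
  unfolding mirror_sub det2_scale det2_foot content_tri by (simp add: abs_mult)

lemma balanced_foot: "balanced_mirror a b c \<Longrightarrow> foot a b c \<in> closed_segment b c"
  unfolding balanced_mirror_def mirror_def by (simp add: algebra_simps scaleR_2)

lemma seg_far: fixes a b c f :: "real^2" assumes "f \<in> closed_segment b c"
  shows "norm (a - f) \<le> max (dist a b) (dist a c)"
proof -
  obtain y where y: "y \<in> {b, c}" "\<forall>x\<in>convex hull {b, c}. norm (x - a) \<le> norm (y - a)"
    using simplex_furthest_le[of "{b,c}" a] by auto
  have "norm (f - a) \<le> norm (y - a)" using y assms by (simp add: segment_convex_hull)
  then show ?thesis using y by (auto simp: dist_norm norm_minus_commute)
qed

lemma mvt_comp:
  fixes f :: "real^2 \<Rightarrow> real"
  assumes "\<And>x. x \<in> closed_segment p q \<Longrightarrow> (f has_derivative (\<lambda>h. g x \<bullet> h)) (at x)"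
    and "\<And>x. x \<in> closed_segment p q \<Longrightarrow> norm (g x - w) \<le> \<eta>"
  shows "\<bar>f q - f p - w \<bullet> (q - p)\<bar> \<le> \<eta> * norm (q - p)"
proof -
  have "norm ((\<lambda>x. f x - w \<bullet> x) q - (\<lambda>x. f x - w \<bullet> x) p) \<le> \<eta> * norm (q - p)"
  proof (rule differentiable_bound[where f' = "\<lambda>x h. (g x - w) \<bullet> h" and S = "closed_segment p q"])
    show "convex (closed_segment p q)" by simp
    fix x assume x: "x \<in> closed_segment p q"
    have "((\<lambda>x. f x - w \<bullet> x) has_derivative (\<lambda>h. g x \<bullet> h - w \<bullet> h)) (at x)"
      by (intro derivative_intros assms(1)[OF x])
    then show "((\<lambda>x. f x - w \<bullet> x) has_derivative (\<lambda>h. (g x - w) \<bullet> h)) (at x within closed_segment p q)"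
      by (simp add: inner_diff_left has_derivative_at_withinI)
    show "onorm (\<lambda>h. (g x - w) \<bullet> h) \<le> \<eta>"
    proof (rule onorm_le)
      fix h
      have "norm ((g x - w) \<bullet> h) \<le> norm (g x - w) * norm h" by (simp add: Cauchy_Schwarz_ineq2)
      also have "\<dots> \<le> \<eta> * norm h" by (intro mult_right_mono assms(2)[OF x]) auto
      finally show "norm ((g x - w) \<bullet> h) \<le> \<eta> * norm h" .
    qed
  qed auto
  then show ?thesis by (simp add: inner_diff_right algebra_simps)
qed



lemma cont_compact_integrable:
  fixes f :: "'a::euclidean_space \<Rightarrow> real"
  assumes "compact S" "continuous_on S f"
  shows "f integrable_on S"
proof -
  have "integrable lborel (\<lambda>x. indicator S x *\<^sub>R f x)"
    by (rule borel_integrable_compact[OF assms])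
  then have "(\<lambda>x. indicator S x *\<^sub>R f x) integrable_on UNIV"
    by (rule integrable_on_lborel)
  moreover have "(\<lambda>x. indicator S x *\<^sub>R f x) = (\<lambda>x. if x \<in> S then f x else 0)"
    by (auto simp: indicator_def)
  ultimately have "(\<lambda>x. if x \<in> S then f x else 0) integrable_on UNIV" by simp
  then show ?thesis by (simp add: integrable_restrict_UNIV)
qed

lemma tri_convex: "convex (tri t)"
  by (cases t) (auto simp: tri_def triangle_def)

lemma tri_compact: "compact (tri t)"
  by (cases t) (auto simp: tri_def triangle_def intro!: finite_imp_compact_convex_hull)

lemma neg_inter:
  fixes S T :: "(real^2) set"
  assumes "convex S" "convex T" "closed S" "closed T" "interior S \<inter> interior T = {}"
  shows "negligible (S \<inter> T)"
proof -
  have "S \<inter> T \<subseteq> frontier S \<union> frontier T"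
    using assms by (auto simp: frontier_def closure_closed)
  moreover have "negligible (frontier S \<union> frontier T)"
    using assms by (simp add: negligible_convex_frontier)
  ultimately show ?thesis by (rule negligible_subset[rotated])
qed

lemma tri_union_integral:
  fixes f :: "real^2 \<Rightarrow> real"
  assumes "finite Pt" "\<Union>(tri ` Pt) = P"
    and disj: "\<forall>t1\<in>Pt. \<forall>t2\<in>Pt. t1 \<noteq> t2 \<longrightarrow> interior (tri t1) \<inter> interior (tri t2) = {}"
    and int: "\<And>t. t \<in> Pt \<Longrightarrow> f integrable_on tri t"
  shows "integral P f = (\<Sum>t\<in>Pt. integral (tri t) f)"
proof -
  have "(f has_integral (\<Sum>S\<in>tri ` Pt. integral S f)) (\<Union>(tri ` Pt))"
  proof (rule has_integral_Union)
    show "finite (tri ` Pt)" using assms by simp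
    show "(f has_integral integral S f) S" if "S \<in> tri ` Pt" for S
      using that int by auto
    show "pairwise (\<lambda>S S'. negligible (S \<inter> S')) (tri ` Pt)"
      unfolding pairwise_def
    proof clarify
      fix t1 t2 assume t: "t1 \<in> Pt" "t2 \<in> Pt" "tri t1 \<noteq> tri t2"
      then have "t1 \<noteq> t2" by auto
      then show "negligible (tri t1 \<inter> tri t2)"
        using disj t by (intro neg_inter tri_convex compact_imp_closed tri_compact) auto
    qed
  qed
  then have "integral P f = (\<Sum>S\<in>tri ` Pt. integral S f)"
    using assms(2) by (simp add: integral_unique)
  also have "\<dots> = (\<Sum>t\<in>Pt. integral (tri t) f)"
  proof (subst sum.reindex_nontrivial[OF assms(1)])
    fix t1 t2 assume t: "t1 \<in> Pt" "t2 \<in> Pt" "t1 \<noteq> t2" "tri t1 = tri t2"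
    have "interior (tri t1) \<inter> interior (tri t2) = {}" using disj t(1) t(2) t(3) by blast
    then have "interior (tri t1) = {}" using t(4) by simp
    then have "tri t1 \<subseteq> frontier (tri t1)"
      using tri_compact[of t1] by (simp add: frontier_def closure_closed compact_imp_closed)
    then have "negligible (tri t1)"
      using negligible_convex_frontier[OF tri_convex[of t1]] negligible_subset by blast
    then show "integral (tri t1) f = 0" by (rule integral_negligible)
  qed simp
  finally show ?thesis .
qed



definition Nf :: "('n::finite \<Rightarrow> real^2 \<Rightarrow> real^2) \<Rightarrow> real^2 \<Rightarrow> real" where
  "Nf g x = wedge_norm (\<chi> j. g j x $ 1) (\<chi> j. g j x $ 2)"

lemma const_integral:
  assumes "S \<in> lmeasurable"
  shows "integral S (\<lambda>x. c) = c * measure lebesgue S"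
proof -
  have "integral S (\<lambda>x. c * 1) = c * integral S (\<lambda>x. 1::real)"
    by (rule integral_mult[symmetric]) (rule integrable_on_const[OF assms])
  then show ?thesis using lmeasure_integral[OF assms] by simp
qed

lemma err_vec:
  fixes s :: "real^2 \<Rightarrow> real^'n" and g :: "'n \<Rightarrow> real^2 \<Rightarrow> real^2"
  assumes der: "\<And>j x. x \<in> closed_segment p q \<Longrightarrow> ((\<lambda>y. s y $ j) has_derivative (\<lambda>h. g j x \<bullet> h)) (at x)"
    and cl: "\<And>j x. x \<in> closed_segment p q \<Longrightarrow> norm (g j x - g j m) \<le> \<eta>"
  shows "norm (s q - s p - (\<chi> j. g j m \<bullet> (q - p))) \<le> real CARD('n) * \<eta> * norm (q - p)"
proof -
  have "norm (s q - s p - (\<chi> j. g j m \<bullet> (q - p))) \<le> (\<Sum>j\<in>UNIV. \<bar>(s q - s p - (\<chi> j. g j m \<bullet> (q - p)))$j\<bar>)"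
    by (rule norm_le_l1_cart)
  also have "\<dots> \<le> (\<Sum>j\<in>(UNIV::'n set). \<eta> * norm (q - p))"
  proof (rule sum_mono)
    fix j
    have "\<bar>s q $ j - s p $ j - g j m \<bullet> (q - p)\<bar> \<le> \<eta> * norm (q - p)"
      by (rule mvt_comp[where g = "g j"]) (auto intro: der cl)
    then show "\<bar>(s q - s p - (\<chi> j. g j m \<bullet> (q - p)))$j\<bar> \<le> \<eta> * norm (q - p)" by simp
  qed
  finally show ?thesis by simp
qed

lemma D_bound:
  fixes g :: "'n::finite \<Rightarrow> real^2 \<Rightarrow> real^2"
  assumes "\<And>j. norm (g j m) \<le> B"
  shows "norm (\<chi> j. g j m \<bullet> u) \<le> real CARD('n) * B * norm u"
proof -
  have "norm (\<chi> j. g j m \<bullet> u) \<le> (\<Sum>j\<in>UNIV. \<bar>(\<chi> j. g j m \<bullet> u)$j\<bar>)"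
    by (rule norm_le_l1_cart)
  also have "\<dots> \<le> (\<Sum>j\<in>(UNIV::'n set). B * norm u)"
  proof (rule sum_mono)
    fix j
    have "\<bar>g j m \<bullet> u\<bar> \<le> norm (g j m) * norm u" by (rule Cauchy_Schwarz_ineq2)
    also have "\<dots> \<le> B * norm u" by (intro mult_right_mono assms) auto
    finally show "\<bar>(\<chi> j. g j m \<bullet> u)$j\<bar> \<le> B * norm u" by simp
  qed
  finally show ?thesis by simp
qed

lemma prod_est:
  fixes eA eB nA nB \<alpha> \<beta> C \<eta> B :: real
  assumes "0 \<le> eA" "0 \<le> eB" "0 \<le> nA" "0 \<le> nB" "0 \<le> \<alpha>" "0 \<le> \<beta>" "0 \<le> C" "0 \<le> \<eta>" "0 \<le> B" "\<eta> \<le> 1"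
    and "eA \<le> C * \<eta> * \<alpha>" "eB \<le> C * \<eta> * \<beta>" "nA \<le> C * B * \<alpha>" "nB \<le> C * (B + \<eta>) * \<beta>"
  shows "2 * eA * nB + 2 * nA * eB \<le> 2 * C\<^sup>2 * (2 * B + 1) * \<eta> * (\<alpha> * \<beta>)"
proof -
  have "eA * nB \<le> (C * \<eta> * \<alpha>) * (C * (B + \<eta>) * \<beta>)" by (intro mult_mono) (use assms in auto)
  moreover have "nA * eB \<le> (C * B * \<alpha>) * (C * \<eta> * \<beta>)" by (intro mult_mono) (use assms in auto)
  moreover have "C * (B + \<eta>) \<le> C * (B + 1)" using assms by (intro mult_left_mono) auto
  then have "(C * \<eta> * \<alpha>) * (C * (B + \<eta>) * \<beta>) \<le> (C * \<eta> * \<alpha>) * (C * (B + 1) * \<beta>)"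
    using assms by (intro mult_left_mono mult_right_mono) auto
  ultimately have "2 * eA * nB + 2 * nA * eB \<le> 2 * ((C * \<eta> * \<alpha>) * (C * (B + 1) * \<beta>)) + 2 * ((C * B * \<alpha>) * (C * \<eta> * \<beta>))"
    by linarith
  also have "\<dots> = 2 * C\<^sup>2 * (2 * B + 1) * \<eta> * (\<alpha> * \<beta>)"
    by (simp add: power2_eq_square algebra_simps)
  finally show ?thesis .
qed

lemma tri_estimate:
  fixes s :: "real^2 \<Rightarrow> real^'n" and g :: "'n \<Rightarrow> real^2 \<Rightarrow> real^2"
  assumes nd: "b \<noteq> c"
    and derA: "\<And>j x. x \<in> closed_segment a (mirror a b c) \<Longrightarrow> ((\<lambda>y. s y $ j) has_derivative (\<lambda>h. g j x \<bullet> h)) (at x)"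
    and derB: "\<And>j x. x \<in> closed_segment b c \<Longrightarrow> ((\<lambda>y. s y $ j) has_derivative (\<lambda>h. g j x \<bullet> h)) (at x)"
    and clA: "\<And>j x. x \<in> closed_segment a (mirror a b c) \<Longrightarrow> norm (g j x - g j (foot a b c)) \<le> \<eta>"
    and clB: "\<And>j x. x \<in> closed_segment b c \<Longrightarrow> norm (g j x - g j (foot a b c)) \<le> \<eta>"
    and gb: "\<And>j. norm (g j (foot a b c)) \<le> B"
    and \<eta>: "0 \<le> \<eta>" "\<eta> \<le> 1" and B: "0 \<le> B"
    and Ncl: "\<And>x. x \<in> triangle a b c \<Longrightarrow> \<bar>Nf g x - Nf g (foot a b c)\<bar> \<le> \<epsilon>1"
    and Nint: "Nf g integrable_on triangle a b c"
  shows "\<bar>(1/4) * wedge_norm (s (mirror a b c) - s a) (s c - s b) - integral (triangle a b c) (Nf g)\<bar>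
          \<le> (2 * (real CARD('n))\<^sup>2 * (2 * B + 1) * \<eta> + \<epsilon>1) * measure lebesgue (triangle a b c)"
proof -
  define a' where "a' = mirror a b c"
  define m where "m = foot a b c"
  define C where "C = real CARD('n)"
  define \<mu> where "\<mu> = measure lebesgue (triangle a b c)"
  define A where "A = s a' - s a"
  define A' where "A' = (\<chi> j. g j m \<bullet> (a' - a))"
  define V where "V = s c - s b"
  define V' where "V' = (\<chi> j. g j m \<bullet> (c - b))"
  have C0: "0 \<le> C" unfolding C_def by simp
  have eA: "norm (A - A') \<le> C * \<eta> * norm (a' - a)"
    unfolding A_def A'_def C_def using err_vec[of a a' s g m \<eta>] derA clA
    unfolding a'_def m_def by blast
  have eB: "norm (V - V') \<le> C * \<eta> * norm (c - b)"
    unfolding V_def V'_def C_def using err_vec[of b c s g m \<eta>] derB clB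
    unfolding m_def by blast
  have nA: "norm A' \<le> C * B * norm (a' - a)"
    unfolding A'_def C_def by (rule D_bound) (use gb m_def in auto)
  have nV': "norm V' \<le> C * B * norm (c - b)"
    unfolding V'_def C_def by (rule D_bound) (use gb m_def in auto)
  have nV: "norm V \<le> C * (B + \<eta>) * norm (c - b)"
  proof -
    have "norm V \<le> norm V' + norm (V - V')" by (metis norm_triangle_sub add.commute)
    also have "\<dots> \<le> C * B * norm (c - b) + C * \<eta> * norm (c - b)" using nV' eB by linarith
    finally show ?thesis by (simp add: algebra_simps)
  qed
  have prod: "norm (a' - a) * norm (c - b) = 4 * \<mu>"
    unfolding a'_def \<mu>_def by (rule mirror_prod[OF nd])
  have w1: "\<bar>wedge_norm A V - wedge_norm A' V'\<bar> \<le> 2 * C\<^sup>2 * (2 * B + 1) * \<eta> * (4 * \<mu>)"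
  proof -
    have "\<bar>wedge_norm A V - wedge_norm A' V'\<bar> \<le> 2 * norm (A - A') * norm V + 2 * norm A' * norm (V - V')"
      by (rule wedge_diff)
    also have "\<dots> \<le> 2 * C\<^sup>2 * (2 * B + 1) * \<eta> * (norm (a' - a) * norm (c - b))"
      by (rule prod_est) (use eA eB nA nV C0 \<eta> B in auto)
    finally show ?thesis unfolding prod .
  qed
  have w2: "wedge_norm A' V' = 4 * \<mu> * Nf g m"
    unfolding A'_def V'_def Nf_def wedge_lin a'_def det2_mirror \<mu>_def ..
  have lm: "triangle a b c \<in> lmeasurable"
    unfolding triangle_def by (intro lmeasurable_compact finite_imp_compact_convex_hull) auto
  have i1: "\<bar>\<mu> * Nf g m - integral (triangle a b c) (Nf g)\<bar> \<le> \<epsilon>1 * \<mu>"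
  proof -
    have "integral (triangle a b c) (\<lambda>x. Nf g x - Nf g m) = integral (triangle a b c) (Nf g) - \<mu> * Nf g m"
      by (subst integral_diff) (auto simp: Nint integrable_on_const[OF lm] const_integral[OF lm] \<mu>_def)
    moreover have "norm (integral (triangle a b c) (\<lambda>x. Nf g x - Nf g m)) \<le> integral (triangle a b c) (\<lambda>x. \<epsilon>1)"
      by (rule integral_norm_bound_integral)
         (auto simp: Nint integrable_on_const[OF lm] integrable_diff Ncl m_def)
    ultimately show ?thesis using const_integral[OF lm, of \<epsilon>1] by (simp add: \<mu>_def abs_minus_commute)
  qed
  have "\<bar>(1/4) * wedge_norm A V - integral (triangle a b c) (Nf g)\<bar>
        \<le> (1/4) * \<bar>wedge_norm A V - wedge_norm A' V'\<bar> + \<bar>\<mu> * Nf g m - integral (triangle a b c) (Nf g)\<bar>"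
  proof -
    have eq: "(1/4) * wedge_norm A V - integral (triangle a b c) (Nf g) =
       (1/4) * (wedge_norm A V - wedge_norm A' V') + (\<mu> * Nf g m - integral (triangle a b c) (Nf g))"
      using w2 by (simp add: algebra_simps)
    have "\<bar>(1/4) * wedge_norm A V - integral (triangle a b c) (Nf g)\<bar> \<le>
       \<bar>(1/4) * (wedge_norm A V - wedge_norm A' V')\<bar> + \<bar>\<mu> * Nf g m - integral (triangle a b c) (Nf g)\<bar>"
      unfolding eq by (rule abs_triangle_ineq)
    then show ?thesis by (simp add: abs_mult)
  qed
  also have "\<dots> \<le> (1/4) * (2 * C\<^sup>2 * (2 * B + 1) * \<eta> * (4 * \<mu>)) + \<epsilon>1 * \<mu>"
    using w1 i1 by (intro add_mono mult_left_mono) auto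
  also have "\<dots> = (2 * C\<^sup>2 * (2 * B + 1) * \<eta> + \<epsilon>1) * \<mu>" by (simp add: algebra_simps)
  finally show ?thesis unfolding A_def V_def a'_def \<mu>_def C_def .
qed



lemma cancel_aux: "(x::real) \<noteq> 0 \<Longrightarrow> x * (e / (2 * x * y)) = e / (2 * y)"
  by (cases "y = 0") (auto simp: field_simps)

lemma half_aux: "(e::real) / (2 * y) + e / (2 * y) = e / y"
  by (cases "y = 0") (auto simp: field_simps)

theorem theorem3:
  fixes \<Omega> P :: "(real^2) set" and s :: "real^2 \<Rightarrow> real^'n" and l1 l2 :: "real^2"
  assumes "open \<Omega>" and "compact_polygon P" and "P \<subseteq> \<Omega>"
    and "smooth_surface \<Omega> s"
    and "norm l1 = 1" and "norm l2 = 1" and "l1 \<bullet> l2 = 0"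
  shows "\<forall>\<epsilon>>0. \<exists>\<delta>>0. \<forall>Pt. admissible_partition \<Omega> P Pt \<and> mesh Pt < \<delta> \<longrightarrow>
           \<bar>(1/4) * (\<Sum>(a,b,c)\<in>Pt. wedge_norm (s (mirror a b c) - s a) (s c - s b))
             - integral P (\<lambda>x. wedge_norm (partial_dir s l1 x) (partial_dir s l2 x))\<bar> < \<epsilon>"
proof (intro allI impI)
  fix \<epsilon> :: real assume epos: "\<epsilon> > 0"
  have ex_g: "\<forall>j. \<exists>gj. \<forall>x\<in>\<Omega>. ((\<lambda>y. s y $ j) has_derivative (\<lambda>h. gj x \<bullet> h)) (at x) \<and> (\<exists>D. (gj has_derivative D) (at x))"
  proof
    fix j
    have "smooth_fun \<Omega> (\<lambda>x. s x $ j)" using assms(4) by (simp add: smooth_surface_def)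
    then obtain gj H where "\<forall>x\<in>\<Omega>. ((\<lambda>y. s y $ j) has_derivative (\<lambda>h. gj x \<bullet> h)) (at x) \<and> (gj has_derivative (\<lambda>h. H x *v h)) (at x)"
      unfolding smooth_fun_def by blast
    then show "\<exists>gj. \<forall>x\<in>\<Omega>. ((\<lambda>y. s y $ j) has_derivative (\<lambda>h. gj x \<bullet> h)) (at x) \<and> (\<exists>D. (gj has_derivative D) (at x))"
      by blast
  qed
  from choice[OF ex_g] obtain g where gprop:
    "\<forall>j. \<forall>x\<in>\<Omega>. ((\<lambda>y. s y $ j) has_derivative (\<lambda>h. g j x \<bullet> h)) (at x) \<and> (\<exists>D. (g j has_derivative D) (at x))"
    by blast
  have gder: "\<And>j x. x \<in> \<Omega> \<Longrightarrow> ((\<lambda>y. s y $ j) has_derivative (\<lambda>h. g j x \<bullet> h)) (at x)"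
    using gprop by blast
  have gcont: "continuous_on \<Omega> (g j)" for j
  proof (rule continuous_at_imp_continuous_on, intro ballI)
    fix x assume "x \<in> \<Omega>"
    then obtain D where "(g j has_derivative D) (at x)" using gprop by blast
    then show "isCont (g j) x" by (rule has_derivative_continuous)
  qed
  obtain vs where vs: "simple_path (polypath vs)" "P = path_image (polypath vs) \<union> inside (path_image (polypath vs))"
    using assms(2) unfolding compact_polygon_def by blast
  have "path (polypath vs)" using vs(1) by (rule simple_path_imp_path)
  then have Pcomp: "compact P"
    unfolding vs(2) compact_eq_bounded_closed
    by (auto intro: closed_path_image_Un_inside bounded_inside bounded_path_image)
  obtain e0 where e0: "0 < e0" "\<And>x. x \<in> P \<Longrightarrow> \<exists>G\<in>{\<Omega>}. ball x e0 \<subseteq> G"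
    using Heine_Borel_lemma[OF Pcomp, of "{\<Omega>}"] assms(1) assms(3) by auto
  define r where "r = e0 / 2"
  have r0: "r > 0" using e0 by (simp add: r_def)
  define K where "K = {x + y | x y. x \<in> P \<and> y \<in> cball 0 r}"
  have Kcomp: "compact K" unfolding K_def by (intro compact_sums Pcomp compact_cball)
  have Kmem: "z \<in> K" if "x \<in> P" "dist x z \<le> r" for x z
  proof -
    have "z = x + (z - x)" by simp
    moreover have "z - x \<in> cball 0 r" using that by (simp add: dist_norm norm_minus_commute)
    ultimately show ?thesis unfolding K_def using that(1) by blast
  qed
  have PK: "P \<subseteq> K" using Kmem r0 by auto
  have KO: "K \<subseteq> \<Omega>"
  proof
    fix z assume "z \<in> K"
    then obtain x y where xy: "z = x + y" "x \<in> P" "y \<in> cball 0 r" unfolding K_def by blast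
    have "z \<in> ball x e0" using xy e0(1) by (simp add: dist_norm r_def)
    then show "z \<in> \<Omega>" using e0(2)[OF xy(2)] by blast
  qed
  define GG where "GG = (\<lambda>x. \<chi> j. g j x)"
  have GGc: "continuous_on \<Omega> GG" unfolding GG_def by (intro continuous_on_vec_lambda gcont)
  have GGu: "uniformly_continuous_on K GG"
    by (rule compact_uniformly_continuous[OF continuous_on_subset[OF GGc KO] Kcomp])
  have Nc: "continuous_on \<Omega> (Nf g)"
    unfolding Nf_def wedge_norm_def by (intro continuous_intros gcont)
  have Nu: "uniformly_continuous_on P (Nf g)"
    by (rule compact_uniformly_continuous[OF continuous_on_subset[OF Nc assms(3)] Pcomp])
  have "bounded (GG ` P)"
    by (intro compact_imp_bounded compact_continuous_image continuous_on_subset[OF GGc assms(3)] Pcomp)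
  then obtain B where B: "B > 0" "\<And>x. x \<in> P \<Longrightarrow> norm (GG x) \<le> B"
    by (auto simp: bounded_pos)
  have gB: "norm (g j x) \<le> B" if "x \<in> P" for j x
    using Finite_Cartesian_Product.norm_nth_le[of "GG x" j] B(2)[OF that] by (simp add: GG_def)
  define \<mu> where "\<mu> = measure lebesgue P"
  have \<mu>0: "0 \<le> \<mu>" unfolding \<mu>_def by simp
  define C where "C = real CARD('n)"
  define L where "L = 2 * C\<^sup>2 * (2 * B + 1)"
  have L0: "0 \<le> L" unfolding L_def using B by simp
  define \<epsilon>1 where "\<epsilon>1 = \<epsilon> / (2 * (\<mu> + 1))"
  have e1: "\<epsilon>1 > 0" unfolding \<epsilon>1_def using epos \<mu>0 by simp
  define \<eta> where "\<eta> = min 1 (\<epsilon> / (2 * (L + 1) * (\<mu> + 1)))"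
  have eta0: "\<eta> > 0" unfolding \<eta>_def using epos \<mu>0 L0 by simp
  have eta1: "\<eta> \<le> 1" unfolding \<eta>_def by simp
  have "L * \<eta> \<le> (L + 1) * \<eta>" using eta0 by simp
  also have "\<dots> \<le> (L + 1) * (\<epsilon> / (2 * (L + 1) * (\<mu> + 1)))"
    unfolding \<eta>_def using L0 by (intro mult_left_mono) auto
  also have "\<dots> = \<epsilon> / (2 * (\<mu> + 1))"
  proof -
    have "L + 1 \<noteq> 0" "\<mu> + 1 \<noteq> 0" using L0 \<mu>0 by auto
    show ?thesis by (rule cancel_aux) (use L0 in auto)
  qed
  finally have Leta: "L * \<eta> \<le> \<epsilon> / (2 * (\<mu> + 1))" .
  define \<kappa> where "\<kappa> = L * \<eta> + \<epsilon>1"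
  have \<kappa>0: "0 \<le> \<kappa>" unfolding \<kappa>_def using L0 eta0 e1 by simp
  have \<kappa>\<mu>: "\<kappa> * \<mu> < \<epsilon>"
  proof -
    have h: "\<epsilon> / (2 * (\<mu> + 1)) + \<epsilon> / (2 * (\<mu> + 1)) = \<epsilon> / (\<mu> + 1)"
      by (rule half_aux)
    have "\<kappa> \<le> \<epsilon> / (2 * (\<mu> + 1)) + \<epsilon> / (2 * (\<mu> + 1))"
      unfolding \<kappa>_def \<epsilon>1_def by (rule add_right_mono[OF Leta])
    then have "\<kappa> \<le> \<epsilon> / (\<mu> + 1)" unfolding h .
    then have "\<kappa> * \<mu> \<le> \<epsilon> / (\<mu> + 1) * \<mu>" using \<mu>0 by (intro mult_right_mono) auto
    also have "\<dots> < \<epsilon>" using \<mu>0 epos by (simp add: field_simps)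
    finally show ?thesis .
  qed
  obtain dN where dN: "dN > 0" "\<And>x x'. x \<in> P \<Longrightarrow> x' \<in> P \<Longrightarrow> dist x' x < dN \<Longrightarrow> dist (Nf g x') (Nf g x) < \<epsilon>1"
    using Nu e1 unfolding uniformly_continuous_on_def by metis
  obtain dg where dg: "dg > 0" "\<And>x x'. x \<in> K \<Longrightarrow> x' \<in> K \<Longrightarrow> dist x' x < dg \<Longrightarrow> dist (GG x') (GG x) < \<eta>"
    using GGu eta0 unfolding uniformly_continuous_on_def by metis
  define \<delta> where "\<delta> = min dN (min (dg / 4) (r / 2))"
  have d0: "\<delta> > 0" unfolding \<delta>_def using dN dg r0 by simp
  have dle: "\<delta> \<le> dN" "\<delta> \<le> dg / 4" "\<delta> \<le> r / 2" unfolding \<delta>_def by auto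
  show "\<exists>\<delta>>0. \<forall>Pt. admissible_partition \<Omega> P Pt \<and> mesh Pt < \<delta> \<longrightarrow>
           \<bar>(1/4) * (\<Sum>(a,b,c)\<in>Pt. wedge_norm (s (mirror a b c) - s a) (s c - s b))
             - integral P (\<lambda>x. wedge_norm (partial_dir s l1 x) (partial_dir s l2 x))\<bar> < \<epsilon>"
  proof (intro exI conjI allI impI)
    show "\<delta> > 0" by (rule d0)
    fix Pt assume Pt: "admissible_partition \<Omega> P Pt \<and> mesh Pt < \<delta>"
    have fin: "finite Pt" and un: "\<Union>(tri ` Pt) = P"
      and tprop: "\<forall>(a, b, c)\<in>Pt. nondegenerate a b c \<and> balanced_at_a \<Omega> a b c"
      and disj: "\<forall>t1\<in>Pt. \<forall>t2\<in>Pt. t1 \<noteq> t2 \<longrightarrow> interior (tri t1) \<inter> interior (tri t2) = {}"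
      using Pt unfolding admissible_partition_def by auto
    have msh: "mesh Pt < \<delta>" using Pt by auto
    have triP: "tri t \<subseteq> P" if "t \<in> Pt" for t using un that by blast
    have side: "max (dist a b) (max (dist b c) (dist c a)) < \<delta>" if "(a,b,c) \<in> Pt" for a b c
    proof -
      have "max (dist a b) (max (dist b c) (dist c a)) \<le> mesh Pt"
        unfolding mesh_def using fin that by (intro Max_ge) force+
      then show ?thesis using msh by linarith
    qed
    have est: "\<bar>(1/4) * wedge_norm (s (mirror a b c) - s a) (s c - s b) - integral (tri (a,b,c)) (Nf g)\<bar>
               \<le> \<kappa> * measure lebesgue (tri (a,b,c))" if abc: "(a,b,c) \<in> Pt" for a b c
    proof -
      have nd: "nondegenerate a b c" and bal: "balanced_at_a \<Omega> a b c" using tprop abc by auto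
      have bc: "b \<noteq> c" using nd unfolding nondegenerate_def by (auto simp: collinear_2)
      have TP: "triangle a b c \<subseteq> P" using triP[OF abc] by (simp add: tri_def)
      have sd: "dist a b < \<delta>" "dist b c < \<delta>" "dist c a < \<delta>" using side[OF abc] by auto
      have diam: "dist x y < \<delta>" if "x \<in> triangle a b c" "y \<in> triangle a b c" for x y
      proof -
        obtain u v where uv: "u \<in> {a,b,c}" "v \<in> {a,b,c}"
          "\<forall>x\<in>convex hull {a,b,c}. \<forall>y\<in>convex hull {a,b,c}. norm (x - y) \<le> norm (u - v)"
        proof -
          have "\<exists>u\<in>{a,b,c}. \<exists>v\<in>{a,b,c}. \<forall>x\<in>convex hull {a,b,c}. \<forall>y\<in>convex hull {a,b,c}. norm (x - y) \<le> norm (u - v)"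
            by (rule simplex_extremal_le) auto
          then show ?thesis using that by blast
        qed
        have "norm (x - y) \<le> norm (u - v)" using uv(3) that by (simp add: triangle_def)
        moreover have "norm (u - v) < \<delta>"
          using uv(1,2) sd d0 by (auto simp: dist_norm norm_minus_commute)
        ultimately show ?thesis by (simp add: dist_norm)
      qed
      define m where "m = foot a b c"
      define a' where "a' = mirror a b c"
      have segT: "closed_segment b c \<subseteq> triangle a b c"
        unfolding triangle_def segment_convex_hull by (rule hull_mono) auto
      have mseg: "m \<in> closed_segment b c" unfolding m_def
        using bal unfolding balanced_at_a_def by (intro balanced_foot) auto
      have mT: "m \<in> triangle a b c" using mseg segT by blast
      have mP: "m \<in> P" using mT TP by blast
      have aT: "a \<in> triangle a b c" unfolding triangle_def by (rule hull_inc) auto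
      have am: "norm (a - m) < \<delta>" using seg_far[OF mseg, of a] sd by (auto simp: dist_commute)
      have a'a: "norm (a' - a) = 2 * norm (a - m)"
        unfolding a'_def m_def mirror_sub by (simp add: norm_minus_commute)
      have segA: "x \<in> K" "x \<in> \<Omega>" "dist x m < dg" if "x \<in> closed_segment a a'" for x
      proof -
        have "norm (x - a) \<le> norm (a' - a)" using segment_bound(1)[OF that] .
        then have xa: "norm (x - a) < 2 * \<delta>" using a'a am by linarith
        show xK: "x \<in> K" using xa aT TP by (intro Kmem[of a]) (auto simp: dist_norm norm_minus_commute \<delta>_def)
        show "x \<in> \<Omega>" using xK KO by blast
        have "norm (x - m) \<le> norm (x - a) + norm (a - m)" using norm_triangle_ineq[of "x - a" "a - m"] by simp
        then show "dist x m < dg" unfolding dist_norm using xa am dle dg(1) by linarith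
      qed
      have gcl: "norm (g j x - g j m) \<le> \<eta>" if "x \<in> K" "dist x m < dg" for j x
      proof -
        have "dist (GG x) (GG m) < \<eta>" using dg(2)[of m x] that mP PK by blast
        moreover have "norm (g j x - g j m) \<le> dist (GG x) (GG m)"
          using Finite_Cartesian_Product.norm_nth_le[of "GG x - GG m" j] by (simp add: GG_def dist_norm)
        ultimately show ?thesis by simp
      qed
      have "\<bar>(1/4) * wedge_norm (s (mirror a b c) - s a) (s c - s b) - integral (triangle a b c) (Nf g)\<bar>
          \<le> (2 * (real CARD('n))\<^sup>2 * (2 * B + 1) * \<eta> + \<epsilon>1) * measure lebesgue (triangle a b c)"
      proof (rule tri_estimate[where g = g])
        show "b \<noteq> c" by (rule bc)
        show "((\<lambda>y. s y $ j) has_derivative (\<lambda>h. g j x \<bullet> h)) (at x)" if "x \<in> closed_segment a (mirror a b c)" for j x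
          using segA(2) that gder unfolding a'_def by blast
        show "((\<lambda>y. s y $ j) has_derivative (\<lambda>h. g j x \<bullet> h)) (at x)" if "x \<in> closed_segment b c" for j x
          using that segT TP assms(3) gder by blast
        show "norm (g j x - g j (foot a b c)) \<le> \<eta>" if "x \<in> closed_segment a (mirror a b c)" for j x
          using gcl segA that unfolding a'_def m_def by blast
        show "norm (g j x - g j (foot a b c)) \<le> \<eta>" if "x \<in> closed_segment b c" for j x
        proof -
          have "x \<in> triangle a b c" using that segT by blast
          then have "x \<in> K" "dist x m < dg" using diam[OF _ mT, of x] TP PK dle dg(1) by auto
          then show ?thesis using gcl unfolding m_def by blast
        qed
        show "norm (g j (foot a b c)) \<le> B" for j using gB mP unfolding m_def by blast
        show "0 \<le> \<eta>" "\<eta> \<le> 1" "0 \<le> B" using eta0 eta1 B by auto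
        show "\<bar>Nf g x - Nf g (foot a b c)\<bar> \<le> \<epsilon>1" if "x \<in> triangle a b c" for x
        proof -
          have "dist x m < dN" using diam[OF that mT] by (simp add: \<delta>_def)
          then have "dist (Nf g x) (Nf g m) < \<epsilon>1" using dN(2)[of m x] that TP mP by blast
          then show ?thesis by (simp add: dist_real_def m_def)
        qed
        show "Nf g integrable_on triangle a b c"
          using tri_compact[of "(a,b,c)"] TP assms(3)
          by (intro cont_compact_integrable) (auto simp: tri_def intro: continuous_on_subset[OF Nc])
      qed
      then show ?thesis by (simp add: tri_def \<kappa>_def L_def C_def)
    qed
    have Fint: "integral P (\<lambda>x. wedge_norm (partial_dir s l1 x) (partial_dir s l2 x)) = integral P (Nf g)"
    proof (rule integral_cong)
      fix x assume "x \<in> P"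
      then have xO: "x \<in> \<Omega>" using assms(3) by blast
      have pd: "partial_dir s l x = (\<chi> j. g j x \<bullet> l)" for l
        unfolding partial_dir_def by (simp add: frechet_derivative_at[OF gder[OF xO], symmetric])
      have d1: "\<bar>det2 l1 l2\<bar> = 1" using det2_orth[OF assms(7)] assms(5,6) by simp
      show "wedge_norm (partial_dir s l1 x) (partial_dir s l2 x) = Nf g x"
        unfolding pd Nf_def wedge_lin d1 by simp
    qed
    have Nsum: "integral P (Nf g) = (\<Sum>t\<in>Pt. integral (tri t) (Nf g))"
    proof (rule tri_union_integral[OF fin un disj])
      fix t assume "t \<in> Pt"
      then have "tri t \<subseteq> \<Omega>" using triP assms(3) by blast
      then show "Nf g integrable_on tri t"
        by (intro cont_compact_integrable tri_compact continuous_on_subset[OF Nc])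
    qed
    have msum: "\<mu> = (\<Sum>t\<in>Pt. measure lebesgue (tri t))"
    proof -
      have "integral P (\<lambda>x. 1::real) = (\<Sum>t\<in>Pt. integral (tri t) (\<lambda>x. 1))"
        by (rule tri_union_integral[OF fin un disj])
           (intro integrable_on_const lmeasurable_compact tri_compact)
      moreover have "integral (tri t) (\<lambda>x. 1::real) = measure lebesgue (tri t)" for t
        by (rule lmeasure_integral[symmetric]) (intro lmeasurable_compact tri_compact)
      ultimately show ?thesis unfolding \<mu>_def using lmeasure_integral[OF lmeasurable_compact[OF Pcomp]] by simp
    qed
    have eq: "(1/4) * (\<Sum>(a,b,c)\<in>Pt. wedge_norm (s (mirror a b c) - s a) (s c - s b))
             - integral P (\<lambda>x. wedge_norm (partial_dir s l1 x) (partial_dir s l2 x))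
         = (\<Sum>t\<in>Pt. (1/4) * (case t of (a,b,c) \<Rightarrow> wedge_norm (s (mirror a b c) - s a) (s c - s b)) - integral (tri t) (Nf g))"
      unfolding Fint Nsum by (simp add: sum_distrib_left sum_subtractf)
    have "\<bar>(\<Sum>t\<in>Pt. (1/4) * (case t of (a,b,c) \<Rightarrow> wedge_norm (s (mirror a b c) - s a) (s c - s b)) - integral (tri t) (Nf g))\<bar>
        \<le> (\<Sum>t\<in>Pt. \<bar>(1/4) * (case t of (a,b,c) \<Rightarrow> wedge_norm (s (mirror a b c) - s a) (s c - s b)) - integral (tri t) (Nf g)\<bar>)"
      by (rule sum_abs)
    also have "\<dots> \<le> (\<Sum>t\<in>Pt. \<kappa> * measure lebesgue (tri t))"
    proof (rule sum_mono)
      fix t assume t: "t \<in> Pt"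
      obtain a b c where abc: "t = (a,b,c)" by (cases t) auto
      show "\<bar>(1/4) * (case t of (a,b,c) \<Rightarrow> wedge_norm (s (mirror a b c) - s a) (s c - s b)) - integral (tri t) (Nf g)\<bar>
            \<le> \<kappa> * measure lebesgue (tri t)"
        using est[of a b c] t unfolding abc by simp
    qed
    also have "\<dots> = \<kappa> * \<mu>" unfolding msum by (simp add: sum_distrib_left)
    also have "\<dots> < \<epsilon>" by (rule \<kappa>\<mu>)
    finally show "\<bar>(1/4) * (\<Sum>(a,b,c)\<in>Pt. wedge_norm (s (mirror a b c) - s a) (s c - s b))
             - integral P (\<lambda>x. wedge_norm (partial_dir s l1 x) (partial_dir s l2 x))\<bar> < \<epsilon>"
      unfolding eq .
  qed
qed

end
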